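(* Let $\mathfrak h\subseteq\Phi^+$ be a Hessenberg set and let $H_T^*(\mathfrak h)$ be its GKM ring. Then $H_T^*(\mathfrak h)$ is stable under the action of $W$ on $\mathrm{Maps}(W,\mathbb R[\Delta])$ given by $(w\cdot\mathcal P)(u)=w\,\mathcal P(w^{-1}u)$ for $w,u\in W$, where on the right $w$ acts on the polynomial $\mathcal P(w^{-1}u)\in\mathbb R[\Delta]$. That is, if $\mathcal P\in H_T^*(\mathfrak h)$ and $w\in W$ then $w\cdot\mathcal P\in H_T^*(\mathfrak h)$.
   Context: Let $V$ be a finite-dimensional real vector space with a symmetric positive definite bilinear form $(\,,)$; for nonzero $\alpha\in V$ let $s_\alpha(v)=v-\frac{2(\alpha,v)}{(\alpha,\alpha)}\alpha$. Let $\Phi\subset V$ be a (crystallographic) root system with base $\Delta=\{\alpha_1,\dots,\alpha_k\}$, positive roots $\Phi^+$ and negative roots $\Phi^-=-\Phi^+$. Write $\alpha\prec\beta$ if $\beta-\alpha$ is a sum of positive roots. A Hessenberg set is a subset $\mathfrak h\subseteq\Phi^+$ whose complement $\Phi^+\setminus\mathfrak h$ is upward closed in $\Phi^+$ (if $\beta\in\Phi^+\setminus\mathfrak h$, $\alpha\in\Phi^+$ and $\beta\prec\alpha$, then $\alpha\in\Phi^+\setminus\mathfrak h$). $W$ is the Weyl group generated by the reflections $s_{\alpha_i}$; it acts linearly on $V$ and hence on the polynomial ring $\mathbb R[\Delta]=\mathbb R[\alpha_1,\dots,\alpha_k]$. The Hessenberg graph $\Gamma_{\mathfrak h}$ has vertex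 set $W$ and a directed edge $u\to w$ whenever $w=s_\alpha u$ with $\alpha\in\Phi^+$ and $w^{-1}\alpha\in-\mathfrak h$. The GKM ring is $H_T^*(\mathfrak h)=\{\mathcal P:W\to\mathbb R[\Delta] : \mathcal P(w)-\mathcal P(s_\alpha w)\in\langle\alpha\rangle \text{ for every edge } w\to s_\alpha w \text{ or } s_\alpha w\to w \text{ of }\Gamma_{\mathfrak h}\}$, where $\langle\alpha\rangle$ is the principal ideal generated by $\alpha$. *)

theory Defs
  imports "HOL-Analysis.Analysis"
begin

text \<open>V is a finite-dimensional real inner product space (type class euclidean_space);
  the bilinear form is the inner product.\<close>

definition refl :: "'a::euclidean_space \<Rightarrow> 'a \<Rightarrow> 'a" where
  "refl \<alpha> v = v - (2 * (\<alpha> \<bullet> v) / (\<alpha> \<bullet> \<alpha>)) *\<^sub>R \<alpha>"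

definition root_system :: "'a::euclidean_space set \<Rightarrow> bool" where
  "root_system \<Phi> \<longleftrightarrow> finite \<Phi> \<and> 0 \<notin> \<Phi> \<and> span \<Phi> = UNIV
     \<and> (\<forall>\<alpha>\<in>\<Phi>. refl \<alpha> ` \<Phi> = \<Phi>)
     \<and> (\<forall>\<alpha>\<in>\<Phi>. \<forall>\<beta>\<in>\<Phi>. 2 * (\<alpha> \<bullet> \<beta>) / (\<alpha> \<bullet> \<alpha>) \<in> \<int>)
     \<and> (\<forall>\<alpha>\<in>\<Phi>. \<forall>c::real. c *\<^sub>R \<alpha> \<in> \<Phi> \<longrightarrow> c = 1 \<or> c = -1)"

definition is_base :: "'a::euclidean_space set \<Rightarrow> 'a set \<Rightarrow> bool" where
  "is_base \<Phi> \<Delta> \<longleftrightarrow> \<Delta> \<subseteq> \<Phi> \<and> independent \<Delta> \<and>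
     (\<forall>\<beta>\<in>\<Phi>. \<exists>c::'a \<Rightarrow> int. \<beta> = (\<Sum>\<alpha>\<in>\<Delta>. of_int (c \<alpha>) *\<^sub>R \<alpha>) \<and>
        ((\<forall>\<alpha>\<in>\<Delta>. c \<alpha> \<ge> 0) \<or> (\<forall>\<alpha>\<in>\<Delta>. c \<alpha> \<le> 0)))"

definition pos_roots :: "'a::euclidean_space set \<Rightarrow> 'a set \<Rightarrow> 'a set" where
  "pos_roots \<Phi> \<Delta> = {\<beta>\<in>\<Phi>. \<exists>c::'a \<Rightarrow> int. \<beta> = (\<Sum>\<alpha>\<in>\<Delta>. of_int (c \<alpha>) *\<^sub>R \<alpha>) \<and>
        (\<forall>\<alpha>\<in>\<Delta>. c \<alpha> \<ge> 0)}"

inductive_set pos_sums :: "'a::euclidean_space set \<Rightarrow> 'a set \<Rightarrow> 'a set" for \<Phi> \<Delta> where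
  base: "\<beta> \<in> pos_roots \<Phi> \<Delta> \<Longrightarrow> \<beta> \<in> pos_sums \<Phi> \<Delta>"
| add: "x \<in> pos_sums \<Phi> \<Delta> \<Longrightarrow> y \<in> pos_sums \<Phi> \<Delta> \<Longrightarrow> x + y \<in> pos_sums \<Phi> \<Delta>"

definition root_prec :: "'a::euclidean_space set \<Rightarrow> 'a set \<Rightarrow> 'a \<Rightarrow> 'a \<Rightarrow> bool" where
  "root_prec \<Phi> \<Delta> \<alpha> \<beta> \<longleftrightarrow> \<beta> - \<alpha> \<in> pos_sums \<Phi> \<Delta>"

definition hessenberg_set :: "'a::euclidean_space set \<Rightarrow> 'a set \<Rightarrow> 'a set \<Rightarrow> bool" where
  "hessenberg_set \<Phi> \<Delta> h \<longleftrightarrow> h \<subseteq> pos_roots \<Phi> \<Delta> \<and>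
     (\<forall>\<beta>\<in>pos_roots \<Phi> \<Delta> - h. \<forall>\<alpha>\<in>pos_roots \<Phi> \<Delta>.
        root_prec \<Phi> \<Delta> \<beta> \<alpha> \<longrightarrow> \<alpha> \<in> pos_roots \<Phi> \<Delta> - h)"

inductive_set weyl :: "'a::euclidean_space set \<Rightarrow> ('a \<Rightarrow> 'a) set" for \<Delta> where
  id: "id \<in> weyl \<Delta>"
| step: "w \<in> weyl \<Delta> \<Longrightarrow> \<alpha> \<in> \<Delta> \<Longrightarrow> refl \<alpha> \<circ> w \<in> weyl \<Delta>"

text \<open>The polynomial ring R[\<Delta>] realised as the ring of real polynomial functions on V
  generated by the linear forms v \<mapsto> (\<alpha>, v), \<alpha> \<in> \<Delta>. Since \<Delta> is linearly independent
  and R is infinite, this is isomorphic to R[\<alpha>_1,...,\<alpha>_k].\<close>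
inductive_set poly_ring :: "'a::euclidean_space set \<Rightarrow> ('a \<Rightarrow> real) set" for \<Delta> where
  const: "(\<lambda>v. c) \<in> poly_ring \<Delta>"
| var: "\<alpha> \<in> \<Delta> \<Longrightarrow> (\<lambda>v. \<alpha> \<bullet> v) \<in> poly_ring \<Delta>"
| add: "f \<in> poly_ring \<Delta> \<Longrightarrow> g \<in> poly_ring \<Delta> \<Longrightarrow> (\<lambda>v. f v + g v) \<in> poly_ring \<Delta>"
| mult: "f \<in> poly_ring \<Delta> \<Longrightarrow> g \<in> poly_ring \<Delta> \<Longrightarrow> (\<lambda>v. f v * g v) \<in> poly_ring \<Delta>"

definition principal_ideal :: "'a::euclidean_space set \<Rightarrow> 'a \<Rightarrow> ('a \<Rightarrow> real) set" where
  "principal_ideal \<Delta> \<alpha> = {f. \<exists>g\<in>poly_ring \<Delta>. f = (\<lambda>v. (\<alpha> \<bullet> v) * g v)}"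

definition hess_edge :: "'a::euclidean_space set \<Rightarrow> 'a set \<Rightarrow> 'a set \<Rightarrow>
    ('a \<Rightarrow> 'a) \<Rightarrow> ('a \<Rightarrow> 'a) \<Rightarrow> 'a \<Rightarrow> bool" where
  "hess_edge \<Phi> \<Delta> h u w \<alpha> \<longleftrightarrow> u \<in> weyl \<Delta> \<and> \<alpha> \<in> pos_roots \<Phi> \<Delta> \<and>
     w = refl \<alpha> \<circ> u \<and> - (inv w \<alpha>) \<in> h"

text \<open>GKM ring: maps W \<rightarrow> R[\<Delta>] satisfying the edge conditions (values off W are irrelevant).\<close>
definition gkm_ring :: "'a::euclidean_space set \<Rightarrow> 'a set \<Rightarrow> 'a set \<Rightarrow>
    (('a \<Rightarrow> 'a) \<Rightarrow> ('a \<Rightarrow> real)) set" where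
  "gkm_ring \<Phi> \<Delta> h = {P. (\<forall>w\<in>weyl \<Delta>. P w \<in> poly_ring \<Delta>) \<and>
     (\<forall>u w \<alpha>. hess_edge \<Phi> \<Delta> h u w \<alpha> \<longrightarrow> (\<lambda>v. P u v - P w v) \<in> principal_ideal \<Delta> \<alpha>)}"

text \<open>Action of W on polynomial functions: (w f)(v) = f(w^{-1} v), so that w sends the linear
  form of \<alpha> to that of w \<alpha>.\<close>
definition poly_act :: "('a \<Rightarrow> 'a) \<Rightarrow> ('a \<Rightarrow> real) \<Rightarrow> ('a \<Rightarrow> real)" where
  "poly_act w f = (\<lambda>v. f (inv w v))"

definition map_act :: "('a \<Rightarrow> 'a) \<Rightarrow> (('a \<Rightarrow> 'a) \<Rightarrow> ('a \<Rightarrow> real)) \<Rightarrow> (('a \<Rightarrow> 'a) \<Rightarrow> ('a \<Rightarrow> real))" where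
  "map_act w P = (\<lambda>u. poly_act w (P (inv w \<circ> u)))"

end

theory Submission
  imports Defs
begin


lemma refl_invol: "refl a (refl a v) = v"
proof (cases "a = 0")
  case True thus ?thesis by (simp add: refl_def)
next
  case False
  hence n: "a \<bullet> a \<noteq> 0" by simp
  show ?thesis unfolding refl_def
    using n by (simp add: inner_diff_right algebra_simps)
qed

lemma refl_inner: "refl a x \<bullet> refl a y = x \<bullet> y"
proof (cases "a = 0")
  case True thus ?thesis by (simp add: refl_def)
next
  case False
  hence n: "a \<bullet> a \<noteq> 0" by simp
  show ?thesis unfolding refl_def
    using n by (simp add: inner_diff_right inner_diff_left inner_commute[of x a] inner_commute[of y a] algebra_simps)
qed

lemma refl_linear: "linear (refl a)"
  by (rule linearI) (simp_all add: refl_def inner_add_right add_divide_distrib scaleR_add_left algebra_simps)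

lemma refl_bij: "bij (refl a)"
  by (metis bij_betw_def inj_def refl_invol surj_def)

lemma refl_neg: "refl (-a) = refl a"
  by (rule ext) (simp add: refl_def)

lemma refl_self: "refl a a = - a"
  by (cases "a = 0") (simp_all add: refl_def algebra_simps scaleR_2)

lemma weyl_props: "w \<in> weyl D \<Longrightarrow> linear w \<and> bij w \<and> (\<forall>x y. w x \<bullet> w y = x \<bullet> y)"
proof (induction rule: weyl.induct)
  case id thus ?case by (simp add: linear_id id_def[symmetric])
next
  case (step w a)
  hence "linear w" "bij w" "\<forall>x y. w x \<bullet> w y = x \<bullet> y" by auto
  thus ?case using refl_linear[of a] refl_bij[of a] refl_inner[of a]
    using linear_compose[of w "refl a"] bij_comp[of w "refl a"] by (simp add: o_def)
qed

lemma weyl_comp: "w1 \<in> weyl D \<Longrightarrow> w2 \<in> weyl D \<Longrightarrow> w1 \<circ> w2 \<in> weyl D"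
proof (induction rule: weyl.induct)
  case id thus ?case by simp
next
  case (step w a)
  thus ?case by (metis comp_assoc weyl.step)
qed

lemma weyl_inv: "w \<in> weyl D \<Longrightarrow> inv w \<in> weyl D"
proof (induction rule: weyl.induct)
  case id thus ?case using weyl.id by (metis inv_id)
next
  case (step w a)
  have bw: "bij w" using weyl_props[OF step.hyps(1)] by blast
  have "inv (refl a \<circ> w) = inv w \<circ> inv (refl a)" by (rule o_inv_distrib[OF refl_bij bw])
  moreover have "inv (refl a) = refl a"
    by (rule inv_equality) (simp_all add: refl_invol)
  moreover have "refl a \<in> weyl D" using weyl.step[OF weyl.id step.hyps(2)] by simp
  ultimately show ?case using weyl_comp[OF step.IH \<open>refl a \<in> weyl D\<close>] by (simp only:)
qed

lemma conj_refl:
  assumes "linear w" "bij w" "\<forall>x y. w x \<bullet> w y = x \<bullet> y"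
  shows "w \<circ> refl b \<circ> inv w = refl (w b)"
proof (rule ext)
  fix v
  have wi: "w (inv w v) = v" using assms(2) by (meson bij_inv_eq_iff)
  have "(w \<circ> refl b \<circ> inv w) v = w (inv w v) - (2 * (b \<bullet> inv w v) / (b \<bullet> b)) *\<^sub>R w b"
    unfolding refl_def o_def using assms(1) by (simp add: linear_diff linear_scale)
  also have "b \<bullet> inv w v = w b \<bullet> v" using assms(3) wi by metis
  also have "b \<bullet> b = w b \<bullet> w b" using assms(3) by simp
  finally show "(w \<circ> refl b \<circ> inv w) v = refl (w b) v" using wi by (simp add: refl_def)
qed

lemma poly_refl: "f \<in> poly_ring D \<Longrightarrow> a \<in> D \<Longrightarrow> f \<circ> refl a \<in> poly_ring D"
proof (induction rule: poly_ring.induct)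
  case (const c) thus ?case by (simp add: o_def poly_ring.const)
next
  case (var b)
  define t where "t = - (2 * (a \<bullet> b) / (a \<bullet> a))"
  have "(\<lambda>v. b \<bullet> v) \<circ> refl a = (\<lambda>v. (\<lambda>v. b \<bullet> v) v + (\<lambda>v. (\<lambda>v. t) v * (\<lambda>v. a \<bullet> v) v) v)"
    by (rule ext) (simp add: refl_def t_def inner_diff_right inner_commute[of a b] algebra_simps)
  moreover have "(\<lambda>v. (\<lambda>v. b \<bullet> v) v + (\<lambda>v. (\<lambda>v. t) v * (\<lambda>v. a \<bullet> v) v) v) \<in> poly_ring D"
    by (intro poly_ring.add poly_ring.mult poly_ring.const poly_ring.var var)
  ultimately show ?case by simp
next
  case (add f g) thus ?case using poly_ring.add[OF add.IH] by (simp add: o_def)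
next
  case (mult f g) thus ?case using poly_ring.mult[OF mult.IH] by (simp add: o_def)
qed

lemma poly_weyl: "w \<in> weyl D \<Longrightarrow> f \<in> poly_ring D \<Longrightarrow> f \<circ> w \<in> poly_ring D"
proof (induction arbitrary: f rule: weyl.induct)
  case id thus ?case by simp
next
  case (step w a)
  have "f \<circ> refl a \<in> poly_ring D" using poly_refl step by blast
  from step.IH[OF this] show ?case by (simp add: comp_assoc)
qed



lemma inv_refl: "inv (refl a) = refl a"
  by (rule inv_equality) (simp_all add: refl_invol)

lemma refl_weyl: "a \<in> D \<Longrightarrow> refl a \<in> weyl D"
  using weyl.step[OF weyl.id] by (metis comp_id)

lemma weyl_root: "w \<in> weyl D \<Longrightarrow> D \<subseteq> \<Phi> \<Longrightarrow> (\<forall>\<alpha>\<in>\<Phi>. refl \<alpha> ` \<Phi> = \<Phi>) \<Longrightarrow> x \<in> \<Phi> \<Longrightarrow> w x \<in> \<Phi>"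
proof (induction arbitrary: x rule: weyl.induct)
  case id thus ?case by simp
next
  case (step w a)
  have "w x \<in> \<Phi>" using step by blast
  moreover have "a \<in> \<Phi>" using step by blast
  ultimately show ?case using step.prems(2) by (metis comp_apply imageI)
qed

lemma pos_sub: "pos_roots \<Phi> D \<subseteq> \<Phi>" unfolding pos_roots_def by auto

lemma pos_or_neg:
  fixes x :: "'a::euclidean_space"
  assumes rs: "root_system \<Phi>" and b: "is_base \<Phi> D" and x: "x \<in> \<Phi>"
  shows "x \<in> pos_roots \<Phi> D \<or> - x \<in> pos_roots \<Phi> D"
proof -
  obtain c :: "_ \<Rightarrow> int" where c: "x = (\<Sum>\<alpha>\<in>D. of_int (c \<alpha>) *\<^sub>R \<alpha>)"
    and s: "(\<forall>\<alpha>\<in>D. c \<alpha> \<ge> 0) \<or> (\<forall>\<alpha>\<in>D. c \<alpha> \<le> 0)"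
  proof -
    have "\<forall>\<beta>\<in>\<Phi>. \<exists>c::'a \<Rightarrow> int. \<beta> = (\<Sum>\<alpha>\<in>D. of_int (c \<alpha>) *\<^sub>R \<alpha>) \<and>
          ((\<forall>\<alpha>\<in>D. c \<alpha> \<ge> 0) \<or> (\<forall>\<alpha>\<in>D. c \<alpha> \<le> 0))" using b unfolding is_base_def by (elim conjE)
    from bspec[OF this x] obtain d0 :: "'a \<Rightarrow> int" where
          "x = (\<Sum>\<alpha>\<in>D. of_int (d0 \<alpha>) *\<^sub>R \<alpha>)" "(\<forall>\<alpha>\<in>D. d0 \<alpha> \<ge> 0) \<or> (\<forall>\<alpha>\<in>D. d0 \<alpha> \<le> 0)"
      by (elim exE conjE)
    thus ?thesis by (rule that)
  qed
  have "\<forall>\<alpha>\<in>\<Phi>. refl \<alpha> ` \<Phi> = \<Phi>" using rs unfolding root_system_def by (elim conjE)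
  hence "refl x ` \<Phi> = \<Phi>" using x by blast
  moreover have "refl x x \<in> refl x ` \<Phi>" using x by (rule imageI)
  ultimately have nx: "- x \<in> \<Phi>" by (simp add: refl_self)
  show ?thesis
  proof (cases "\<forall>\<alpha>\<in>D. c \<alpha> \<ge> 0")
    case True thus ?thesis using x c unfolding pos_roots_def by blast
  next
    case False
    hence "\<forall>\<alpha>\<in>D. - c \<alpha> \<ge> 0" using s by auto
    moreover have "- x = (\<Sum>\<alpha>\<in>D. of_int (- c \<alpha>) *\<^sub>R \<alpha>)" using c by (simp add: sum_negf)
    ultimately have "- x \<in> pos_roots \<Phi> D" using nx unfolding pos_roots_def
      by (intro CollectI conjI exI[of _ "\<lambda>\<alpha>. - c \<alpha>"]) auto
    thus ?thesis by blast
  qed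
qed

lemma indep_coeff:
  assumes "independent D" "(\<Sum>\<alpha>\<in>D. of_int (c \<alpha>) *\<^sub>R \<alpha>) = (\<Sum>\<alpha>\<in>D. of_int (d \<alpha>) *\<^sub>R (\<alpha>::'a::euclidean_space))"
    "a \<in> D"
  shows "c a = d a"
proof -
  have fin: "finite D" using assms(1) by (rule finiteI_independent)
  have "(\<Sum>\<alpha>\<in>D. real_of_int (c \<alpha> - d \<alpha>) *\<^sub>R \<alpha>) = 0"
    using assms(2) by (simp add: scaleR_diff_left sum_subtractf)
  moreover have H: "\<not> (\<exists>u. (\<exists>v\<in>D. u v \<noteq> 0) \<and> (\<Sum>v\<in>D. u v *\<^sub>R v) = 0)"
    using assms(1) dependent_finite[OF fin] by simp
  ultimately show ?thesis
  proof (rule_tac ccontr)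
    assume s0: "(\<Sum>\<alpha>\<in>D. real_of_int (c \<alpha> - d \<alpha>) *\<^sub>R \<alpha>) = 0" and ne: "c a \<noteq> d a"
    have "(\<exists>v\<in>D. real_of_int (c v - d v) \<noteq> 0) \<and> (\<Sum>v\<in>D. real_of_int (c v - d v) *\<^sub>R v) = 0"
      using s0 ne assms(3) by auto
    hence "\<exists>u. (\<exists>v\<in>D. u v \<noteq> 0) \<and> (\<Sum>v\<in>D. u v *\<^sub>R v) = 0" by (rule exI[where x="\<lambda>v. real_of_int (c v - d v)"])
    with H show False by contradiction
  qed
qed

lemma key:
  fixes \<Phi> D :: "'a::euclidean_space set"
  assumes rs: "root_system \<Phi>" and b: "is_base \<Phi> D"
  shows "\<beta> \<in> pos_roots \<Phi> D \<Longrightarrow> refl \<beta> \<in> weyl D"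
proof -
  have DP: "D \<subseteq> \<Phi>" and ind: "independent D" using b unfolding is_base_def by auto
  have fin: "finite D" using ind by (rule finiteI_independent)
  have rsP: "\<forall>\<alpha>\<in>\<Phi>. refl \<alpha> ` \<Phi> = \<Phi>" "0 \<notin> \<Phi>"
    "\<forall>\<alpha>\<in>\<Phi>. \<forall>\<beta>\<in>\<Phi>. 2 * (\<alpha> \<bullet> \<beta>) / (\<alpha> \<bullet> \<alpha>) \<in> \<int>"
    "\<forall>\<alpha>\<in>\<Phi>. \<forall>c::real. c *\<^sub>R \<alpha> \<in> \<Phi> \<longrightarrow> c = 1 \<or> c = -1"
    using rs unfolding root_system_def by auto
  have main: "\<And>\<beta> c. \<beta> \<in> \<Phi> \<Longrightarrow> \<beta> = (\<Sum>\<alpha>\<in>D. of_int (c \<alpha>) *\<^sub>R \<alpha>) \<Longrightarrow> (\<forall>\<alpha>\<in>D. c \<alpha> \<ge> 0)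
     \<Longrightarrow> nat (\<Sum>\<alpha>\<in>D. c \<alpha>) = n \<Longrightarrow> refl \<beta> \<in> weyl D" for n
  proof (induction n rule: less_induct)
    case (less n \<beta> c)
    have bnz: "\<beta> \<noteq> 0" using less.prems(1) rsP(2) by auto
    have "\<beta> \<bullet> \<beta> = (\<Sum>\<alpha>\<in>D. of_int (c \<alpha>) * (\<alpha> \<bullet> \<beta>))"
      using less.prems(2) by (metis (no_types, lifting) inner_scaleR_left inner_sum_left sum.cong)
    moreover have "\<beta> \<bullet> \<beta> > 0" using bnz by simp
    ultimately obtain a where aD: "a \<in> D" and ab: "a \<bullet> \<beta> > 0"
    proof -
      assume h: "\<And>a. a \<in> D \<Longrightarrow> 0 < a \<bullet> \<beta> \<Longrightarrow> thesis"
      { assume "\<forall>a\<in>D. a \<bullet> \<beta> \<le> 0"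
        hence "(\<Sum>\<alpha>\<in>D. of_int (c \<alpha>) * (\<alpha> \<bullet> \<beta>)) \<le> 0"
          using less.prems(3) by (intro sum_nonpos) (simp add: mult_nonneg_nonpos)
        hence False using \<open>\<beta> \<bullet> \<beta> > 0\<close> \<open>\<beta> \<bullet> \<beta> = _\<close> by simp }
      thus thesis using h by force
    qed
    have aP: "a \<in> \<Phi>" using aD DP by auto
    show ?case
    proof (cases "\<beta> = a")
      case True thus ?thesis using refl_weyl[OF aD] by simp
    next
      case False
      define m where "m = 2 * (a \<bullet> \<beta>) / (a \<bullet> a)"
      have "m \<in> \<int>" using bspec[OF bspec[OF rsP(3) aP] less.prems(1)] unfolding m_def .
      then obtain k where k: "m = of_int k" by (metis Ints_cases)
      have "a \<noteq> 0" using aP rsP(2) by auto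
      hence "a \<bullet> a > 0" by simp
      hence "m > 0" unfolding m_def using ab by simp
      hence k1: "k \<ge> 1" using k by simp
      define \<beta>' where "\<beta>' = refl a \<beta>"
      have b': "\<beta>' = \<beta> - of_int k *\<^sub>R a" unfolding \<beta>'_def refl_def m_def[symmetric] k ..
      have "refl a \<beta> \<in> refl a ` \<Phi>" using less.prems(1) by (rule imageI)
      hence b'P: "\<beta>' \<in> \<Phi>" unfolding \<beta>'_def using bspec[OF rsP(1) aP] by simp
      define c' where "c' = (\<lambda>x. c x - (if x = a then k else 0))"
      have c'sum: "\<beta>' = (\<Sum>\<alpha>\<in>D. of_int (c' \<alpha>) *\<^sub>R \<alpha>)"
        unfolding b' less.prems(2) c'_def using fin aD
        by (simp add: scaleR_diff_left sum_subtractf of_int_diff if_distrib[of real_of_int] if_distrib[of "\<lambda>x. x *\<^sub>R _"] sum.delta cong: if_cong)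
      obtain d :: "_ \<Rightarrow> int" where d: "\<beta>' = (\<Sum>\<alpha>\<in>D. of_int (d \<alpha>) *\<^sub>R \<alpha>)"
        and s: "(\<forall>\<alpha>\<in>D. d \<alpha> \<ge> 0) \<or> (\<forall>\<alpha>\<in>D. d \<alpha> \<le> 0)"
      proof -
        have "\<forall>\<beta>\<in>\<Phi>. \<exists>c::'a \<Rightarrow> int. \<beta> = (\<Sum>\<alpha>\<in>D. of_int (c \<alpha>) *\<^sub>R \<alpha>) \<and>
          ((\<forall>\<alpha>\<in>D. c \<alpha> \<ge> 0) \<or> (\<forall>\<alpha>\<in>D. c \<alpha> \<le> 0))" using b unfolding is_base_def by (elim conjE)
        from bspec[OF this b'P] obtain d0 :: "'a \<Rightarrow> int" where
          "\<beta>' = (\<Sum>\<alpha>\<in>D. of_int (d0 \<alpha>) *\<^sub>R \<alpha>)" "(\<forall>\<alpha>\<in>D. d0 \<alpha> \<ge> 0) \<or> (\<forall>\<alpha>\<in>D. d0 \<alpha> \<le> 0)"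
          by (elim exE conjE)
        thus ?thesis by (rule that)
      qed
      have dc: "\<And>x. x \<in> D \<Longrightarrow> d x = c' x" using indep_coeff[OF ind trans[OF d[symmetric] c'sum]] .
      show ?thesis
      proof (cases "\<forall>\<alpha>\<in>D. d \<alpha> \<ge> 0")
        case True
        hence c'p: "\<forall>\<alpha>\<in>D. c' \<alpha> \<ge> 0" using dc by auto
        have sc': "(\<Sum>\<alpha>\<in>D. c' \<alpha>) = (\<Sum>\<alpha>\<in>D. c \<alpha>) - k"
          unfolding c'_def using fin aD by (simp add: sum_subtractf sum.delta)
        have "(\<Sum>\<alpha>\<in>D. c' \<alpha>) \<ge> 0" using c'p by (simp add: sum_nonneg)
        hence lt: "nat (\<Sum>\<alpha>\<in>D. c' \<alpha>) < n" using less.prems(4) sc' k1 by linarith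
        have rb': "refl \<beta>' \<in> weyl D" using less.IH[OF lt b'P c'sum c'p] by simp
        have "refl a \<circ> refl \<beta>' \<circ> inv (refl a) = refl (refl a \<beta>')"
          by (rule conj_refl) (simp_all add: refl_linear refl_bij refl_inner)
        hence "refl \<beta> = refl a \<circ> refl \<beta>' \<circ> refl a"
          unfolding \<beta>'_def by (simp add: refl_invol inv_refl)
        thus ?thesis using weyl_comp[OF weyl_comp[OF refl_weyl[OF aD] rb'] refl_weyl[OF aD]] by (simp only:)
      next
        case False
        hence dn: "\<forall>\<alpha>\<in>D. d \<alpha> \<le> 0" using s by blast
        have z: "\<forall>x\<in>D - {a}. c x = 0"
        proof
          fix x assume x: "x \<in> D - {a}"
          hence "d x = c x" using dc unfolding c'_def by simp
          moreover have "d x \<le> 0" "c x \<ge> 0" using dn less.prems(3) x by auto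
          ultimately show "c x = 0" by linarith
        qed
        have "\<beta> = (\<Sum>\<alpha>\<in>insert a (D - {a}). of_int (c \<alpha>) *\<^sub>R \<alpha>)"
          using less.prems(2) aD by (simp add: insert_absorb)
        also have "\<dots> = of_int (c a) *\<^sub>R a"
          using fin z by (subst sum.insert) auto
        finally have beq: "\<beta> = of_int (c a) *\<^sub>R a" .
        hence "of_int (c a) *\<^sub>R a \<in> \<Phi>" using less.prems(1) by simp
        hence "real_of_int (c a) = 1 \<or> real_of_int (c a) = -1" using bspec[OF rsP(4) aP] by blast
        moreover have "c a \<ge> 0" using less.prems(3) aD by blast
        ultimately have "c a = 1" by linarith
        hence "\<beta> = a" using beq by simp
        thus ?thesis using \<open>\<beta> \<noteq> a\<close> by blast
      qed
    qed
  qed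
  assume "\<beta> \<in> pos_roots \<Phi> D"
  then obtain c :: "_ \<Rightarrow> int" where "\<beta> \<in> \<Phi>" "\<beta> = (\<Sum>\<alpha>\<in>D. of_int (c \<alpha>) *\<^sub>R \<alpha>)" "\<forall>\<alpha>\<in>D. c \<alpha> \<ge> 0"
    unfolding pos_roots_def by blast
  from main[OF this refl] show ?thesis .
qed



theorem proposition2p3:
  fixes \<Phi> \<Delta> h :: "'a::euclidean_space set"
    and P :: "('a \<Rightarrow> 'a) \<Rightarrow> ('a \<Rightarrow> real)"
    and w :: "'a \<Rightarrow> 'a"
  assumes "root_system \<Phi>"
    and "is_base \<Phi> \<Delta>"
    and "hessenberg_set \<Phi> \<Delta> h"
    and "P \<in> gkm_ring \<Phi> \<Delta> h"
    and "w \<in> weyl \<Delta>"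
  shows "map_act w P \<in> gkm_ring \<Phi> \<Delta> h"
proof -
  note rs = assms(1) and b = assms(2) and wW = assms(5)
  have DP: "\<Delta> \<subseteq> \<Phi>" using b unfolding is_base_def by (elim conjE)
  have rP: "\<forall>\<alpha>\<in>\<Phi>. refl \<alpha> ` \<Phi> = \<Phi>" using rs unfolding root_system_def by (elim conjE)
  have P1: "\<forall>u\<in>weyl \<Delta>. P u \<in> poly_ring \<Delta>"
    and P2: "\<forall>u w \<alpha>. hess_edge \<Phi> \<Delta> h u w \<alpha> \<longrightarrow> (\<lambda>v. P u v - P w v) \<in> principal_ideal \<Delta> \<alpha>"
    using assms(4) unfolding gkm_ring_def by auto
  define iw where "iw = inv w"
  have iwW: "iw \<in> weyl \<Delta>" unfolding iw_def using weyl_inv[OF wW] .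
  have wp: "linear w" "bij w" "\<forall>x y. w x \<bullet> w y = x \<bullet> y" using weyl_props[OF wW] by auto
  have iwp: "linear iw" "bij iw" "\<forall>x y. iw x \<bullet> iw y = x \<bullet> y" using weyl_props[OF iwW] by auto
  have inviw: "inv iw = w" unfolding iw_def using wp(2) by (simp add: inv_inv_eq)
  have wiw: "w \<circ> iw = id" unfolding iw_def using wp(2)
    by (meson bij_is_surj surj_iff)
  have ma: "\<And>u v. map_act w P u v = P (iw \<circ> u) (iw v)"
    unfolding map_act_def poly_act_def iw_def by simp
  show ?thesis
    unfolding gkm_ring_def
  proof (intro CollectI conjI ballI allI impI)
    fix u assume uW: "u \<in> weyl \<Delta>"
    have "P (iw \<circ> u) \<in> poly_ring \<Delta>" using P1 weyl_comp[OF iwW uW] by blast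
    from poly_weyl[OF iwW this] have "P (iw \<circ> u) \<circ> iw \<in> poly_ring \<Delta>" .
    moreover have "map_act w P u = P (iw \<circ> u) \<circ> iw" using ma by (intro ext) simp
    ultimately show "map_act w P u \<in> poly_ring \<Delta>" by simp
  next
    fix u w' \<alpha> assume e: "hess_edge \<Phi> \<Delta> h u w' \<alpha>"
    hence uW: "u \<in> weyl \<Delta>" and ap: "\<alpha> \<in> pos_roots \<Phi> \<Delta>" and w'd: "w' = refl \<alpha> \<circ> u"
      and hn: "- (inv w' \<alpha>) \<in> h" unfolding hess_edge_def by auto
    define u'' where "u'' = iw \<circ> u"
    define \<beta> where "\<beta> = iw \<alpha>"
    have u''W: "u'' \<in> weyl \<Delta>" unfolding u''_def using weyl_comp[OF iwW uW] .
    have aP: "\<alpha> \<in> \<Phi>" using ap pos_sub by blast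
    have bP: "\<beta> \<in> \<Phi>" unfolding \<beta>_def using weyl_root[OF iwW DP rP aP] .
    have cj: "iw \<circ> refl \<alpha> \<circ> w = refl \<beta>" unfolding \<beta>_def
      using conj_refl[OF iwp] inviw by simp
    have "iw \<circ> refl \<alpha> = refl \<beta> \<circ> iw"
    proof -
      have "iw \<circ> refl \<alpha> = iw \<circ> refl \<alpha> \<circ> (w \<circ> iw)" using wiw by simp
      also have "\<dots> = (iw \<circ> refl \<alpha> \<circ> w) \<circ> iw" by (simp only: comp_assoc)
      also have "\<dots> = refl \<beta> \<circ> iw" using cj by (simp only:)
      finally show ?thesis .
    qed
    define w'' where "w'' = refl \<beta> \<circ> u''"
    have w''d: "w'' = iw \<circ> w'" unfolding w''_def u''_def w'd
      using \<open>iw \<circ> refl \<alpha> = refl \<beta> \<circ> iw\<close> by (metis comp_assoc)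
    have ub: "bij u" using weyl_props[OF uW] by blast
    have w'b: "bij w'" unfolding w'd using bij_comp[OF ub refl_bij] .
    define x0 where "x0 = inv w' \<alpha>"
    have wx0: "w' x0 = \<alpha>" unfolding x0_def using w'b by (meson bij_inv_eq_iff)
    have w''x0: "w'' x0 = \<beta>" unfolding w''d \<beta>_def using wx0 by simp
    have u''b: "bij u''" using weyl_props[OF u''W] by blast
    have w''b: "bij w''" unfolding w''_def using bij_comp[OF u''b refl_bij] .
    have mu: "\<And>v. map_act w P u v = P u'' (iw v)" unfolding u''_def using ma by simp
    have mw: "\<And>v. map_act w P w' v = P w'' (iw v)" unfolding w''d using ma by simp
    have ex: "\<exists>g\<in>poly_ring \<Delta>. (\<lambda>v. P u'' v - P w'' v) = (\<lambda>v. (\<beta> \<bullet> v) * g v)"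
    proof (cases "\<beta> \<in> pos_roots \<Phi> \<Delta>")
      case True
      have "inv w'' \<beta> = x0" using inv_f_eq[OF bij_is_inj[OF w''b] w''x0] .
      hence "hess_edge \<Phi> \<Delta> h u'' w'' \<beta>" unfolding hess_edge_def
        using u''W True w''_def hn x0_def by simp
      hence "(\<lambda>v. P u'' v - P w'' v) \<in> principal_ideal \<Delta> \<beta>" using P2 by blast
      thus ?thesis unfolding principal_ideal_def by blast
    next
      case False
      define \<gamma> where "\<gamma> = - \<beta>"
      have gp: "\<gamma> \<in> pos_roots \<Phi> \<Delta>" using pos_or_neg[OF rs b bP] False unfolding \<gamma>_def by blast
      have rg: "refl \<gamma> = refl \<beta>" unfolding \<gamma>_def by (rule refl_neg)
      have rgW: "refl \<gamma> \<in> weyl \<Delta>" using key[OF rs b gp] .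
      have w''W: "w'' \<in> weyl \<Delta>" unfolding w''_def using weyl_comp[OF rgW u''W] rg by simp
      have u''d: "u'' = refl \<gamma> \<circ> w''" unfolding w''_def rg
        by (rule ext) (simp add: refl_invol)
      have "u'' x0 = \<gamma>" unfolding u''d using w''x0 rg by (simp add: refl_self \<gamma>_def)
      hence "inv u'' \<gamma> = x0" using inv_f_eq[OF bij_is_inj[OF u''b]] by blast
      hence "hess_edge \<Phi> \<Delta> h w'' u'' \<gamma>" unfolding hess_edge_def
        using w''W gp u''d hn x0_def by simp
      hence "(\<lambda>v. P w'' v - P u'' v) \<in> principal_ideal \<Delta> \<gamma>" using P2 by blast
      then obtain g where g: "g \<in> poly_ring \<Delta>" "(\<lambda>v. P w'' v - P u'' v) = (\<lambda>v. (\<gamma> \<bullet> v) * g v)"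
        unfolding principal_ideal_def by blast
      have "(\<lambda>v. P u'' v - P w'' v) = (\<lambda>v. (\<beta> \<bullet> v) * g v)"
      proof
        fix v
        have "P w'' v - P u'' v = (\<gamma> \<bullet> v) * g v" using fun_cong[OF g(2)] by simp
        thus "P u'' v - P w'' v = (\<beta> \<bullet> v) * g v" unfolding \<gamma>_def by simp
      qed
      thus ?thesis using g(1) by blast
    qed
    then obtain g where g: "g \<in> poly_ring \<Delta>" "(\<lambda>v. P u'' v - P w'' v) = (\<lambda>v. (\<beta> \<bullet> v) * g v)"
      by blast
    have "g \<circ> iw \<in> poly_ring \<Delta>" using poly_weyl[OF iwW g(1)] .
    moreover have "(\<lambda>v. map_act w P u v - map_act w P w' v) = (\<lambda>v. (\<alpha> \<bullet> v) * (g \<circ> iw) v)"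
    proof
      fix v
      have "map_act w P u v - map_act w P w' v = (\<beta> \<bullet> iw v) * g (iw v)"
        using mu mw fun_cong[OF g(2), of "iw v"] by simp
      also have "\<beta> \<bullet> iw v = \<alpha> \<bullet> v" unfolding \<beta>_def using iwp(3) by simp
      finally show "map_act w P u v - map_act w P w' v = (\<alpha> \<bullet> v) * (g \<circ> iw) v" by simp
    qed
    ultimately show "(\<lambda>v. map_act w P u v - map_act w P w' v) \<in> principal_ideal \<Delta> \<alpha>"
      unfolding principal_ideal_def by blast
  qed
qed

end
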